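(* Let $N, T, L \ge 1$ be integers, let $P = \lfloor T/L \rfloor \ge 1$ and $\bar{P} = N P$. Let $f = (f_1,\dots,f_N)$ with each $f_n:\mathbb{Z}\to\mathbb{R}$ be an order-$(K, R_{\max})$ multivariate LRF, i.e. there exist $K \ge 1$, vectors $\theta_n \in \mathbb{R}^K$ ($n \in [N]$), and functions $h_1,\dots,h_K:\mathbb{Z}\to\mathbb{R}$ such that $f_n(t) = \sum_{k=1}^K (\theta_n)_k h_k(t)$ for all $n\in[N]$ and $t$, where each $h_k$ is an order-$R_k$ LRF with $R_k \le R_{\max}$. Let $\boldsymbol{M}^f \in \mathbb{R}^{L\times \bar{P}}$ be the stacked Page matrix of $f$, defined by $M^f_{i,\, j + P(n-1)} = f_n(i + (j-1)L)$ for $i\in[L]$, $j\in[P]$, $n\in[N]$. Then $\operatorname{rank}(\boldsymbol{M}^f) \le K \cdot R_{\max}$.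
   Context: $[m] := \{1,\dots,m\}$. A function $h:\mathbb{Z}\to\mathbb{R}$ is called an order-$R$ (univariate) linear recurrent formula (LRF) (relative to the horizon $T$) if there exist functions $g_r, \tilde h_r : \mathbb{Z}\to\mathbb{R}$, $r\in[R]$, such that $h(i+j) = \sum_{r=1}^R g_r(i)\,\tilde h_r(j)$ for all integers $i, j \ge 0$ with $i + j \le T$. *)

theory Defs
  imports Complex_Main "Jordan_Normal_Form.DL_Rank"
begin

definition is_LRF :: "nat \<Rightarrow> nat \<Rightarrow> (int \<Rightarrow> real) \<Rightarrow> bool" where
  "is_LRF T R h \<longleftrightarrow>
     (\<exists>(g :: nat \<Rightarrow> int \<Rightarrow> real) (ht :: nat \<Rightarrow> int \<Rightarrow> real).
        \<forall>i j :: int. 0 \<le> i \<longrightarrow> 0 \<le> j \<longrightarrow> i + j \<le> int T \<longrightarrow>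
          h (i + j) = (\<Sum>r = 1..R. g r i * ht r j))"

definition is_mLRF :: "nat \<Rightarrow> nat \<Rightarrow> nat \<Rightarrow> nat \<Rightarrow> (nat \<Rightarrow> int \<Rightarrow> real) \<Rightarrow> bool" where
  "is_mLRF T N K Rmax f \<longleftrightarrow> 1 \<le> K \<and>
     (\<exists>(\<theta> :: nat \<Rightarrow> nat \<Rightarrow> real) (h :: nat \<Rightarrow> int \<Rightarrow> real) (R :: nat \<Rightarrow> nat).
        (\<forall>n \<in> {1..N}. \<forall>t. f n t = (\<Sum>k = 1..K. \<theta> n k * h k t)) \<and>
        (\<forall>k \<in> {1..K}. is_LRF T (R k) (h k) \<and> R k \<le> Rmax))"

text \<open>Jordan_Normal_Form matrices are
  0-indexed: entry (i, c) with 0-based row i and column c = (j-1) + P(n-1) is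
  f_n((i+1) + (j-1) L), i.e. n = c div P + 1 and j - 1 = c mod P.\<close>
definition stacked_page_matrix :: "nat \<Rightarrow> nat \<Rightarrow> nat \<Rightarrow> (nat \<Rightarrow> int \<Rightarrow> real) \<Rightarrow> real mat" where
  "stacked_page_matrix N T L f =
     (let P = T div L in
      mat L (N * P) (\<lambda>(i, c). f (c div P + 1) (int (i + 1) + int (c mod P) * int L)))"

end

theory Submission
  imports Defs
begin

lemma rank_sum_rank1:
  fixes u v :: "'b \<Rightarrow> nat \<Rightarrow> real"
  assumes "finite S"
  shows "vec_space.rank n (mat n C (\<lambda>(i, c). \<Sum>q\<in>S. u q i * v q c)) \<le> card S"
  using assms
proof (induction S rule: finite_induct)
  case empty
  have "mat n C (\<lambda>(i, c). \<Sum>q\<in>{}. u q i * v q c) = (0\<^sub>m n C :: real mat)"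
    by (auto simp: zero_mat_def)
  then show ?case unfolding card.empty by (simp only: vec_space.rank_0I)
next
  case (insert x F)
  have eq: "mat n C (\<lambda>(i, c). \<Sum>q\<in>insert x F. u q i * v q c)
     = mat n C (\<lambda>(i, c). u x i * v x c) + mat n C (\<lambda>(i, c). \<Sum>q\<in>F. u q i * v q c)"
    using insert by (auto intro!: eq_matI)
  have "vec_space.rank n (mat n C (\<lambda>(i, c). \<Sum>q\<in>insert x F. u q i * v q c))
     \<le> vec_space.rank n (mat n C (\<lambda>(i, c). u x i * v x c)) + vec_space.rank n (mat n C (\<lambda>(i, c). \<Sum>q\<in>F. u q i * v q c))"
    unfolding eq by (rule vec_space.rank_subadditive) auto
  moreover have "vec_space.rank n (mat n C (\<lambda>(i, c). u x i * v x c)) \<le> 1"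
    by (rule vec_space.rank_le_1_product_entries[where f="u x" and g="v x"]) auto
  ultimately show ?case using insert by simp
qed

theorem proposition3p2:
  fixes N T L K Rmax :: nat and f :: "nat \<Rightarrow> int \<Rightarrow> real"
  assumes "N \<ge> 1" and "T \<ge> 1" and "L \<ge> 1" and "T div L \<ge> 1"
    and "is_mLRF T N K Rmax f"
  shows "vec_space.rank L (stacked_page_matrix N T L f) \<le> K * Rmax"
proof -
  define P where "P = T div L"
  obtain \<theta> h R where fdef: "\<forall>n \<in> {1..N}. \<forall>t. f n t = (\<Sum>k = 1..K. \<theta> n k * h k t)"
    and hl: "\<forall>k \<in> {1..K}. is_LRF T (R k) (h k) \<and> R k \<le> Rmax"
    using assms(5) unfolding is_mLRF_def by blast
  have "\<forall>k. \<exists>g ht. k \<in> {1..K} \<longrightarrow> (\<forall>i j :: int. 0 \<le> i \<longrightarrow> 0 \<le> j \<longrightarrow> i + j \<le> int T \<longrightarrow>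
          h k (i + j) = (\<Sum>r = 1..R k. g r i * ht r j))"
    using hl unfolding is_LRF_def by blast
  then obtain g ht where ght: "\<And>k i j. k \<in> {1..K} \<Longrightarrow> 0 \<le> i \<Longrightarrow> 0 \<le> j \<Longrightarrow> i + j \<le> int T \<Longrightarrow>
          h k (i + j) = (\<Sum>r = 1..R k. g k r i * ht k r j)"
    by metis
  define S where "S = {1..K} \<times> {1..Rmax}"
  define u where "u = (\<lambda>(k, r) (i::nat). if r \<le> R k then ht k r (int (i + 1)) else 0)"
  define v where "v = (\<lambda>(k, r) (c::nat). \<theta> (c div P + 1) k * g k r (int (c mod P) * int L))"
  have "stacked_page_matrix N T L f = mat L (N * P) (\<lambda>(i, c). \<Sum>q\<in>S. u q i * v q c)"
  proof (rule eq_matI)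
    fix i c assume i: "i < dim_row (mat L (N * P) (\<lambda>(i, c). \<Sum>q\<in>S. u q i * v q c))"
      and c: "c < dim_col (mat L (N * P) (\<lambda>(i, c). \<Sum>q\<in>S. u q i * v q c))"
    have iL: "i < L" and cNP: "c < N * P" using i c by auto
    have P0: "P > 0" using assms(4) P_def by simp
    have "c div P < N" using cNP P0 by (simp add: div_less_iff_less_mult mult.commute)
    then have n: "c div P + 1 \<in> {1..N}" by simp
    have "(c mod P + 1) * L \<le> P * L" using P0 by (intro mult_le_mono1) (simp add: Suc_leI)
    moreover have "P * L \<le> T" unfolding P_def by simp
    ultimately have bnd: "(c mod P) * L + (i + 1) \<le> T" using iL by (simp add: algebra_simps)
    have bndi: "int (c mod P) * int L + int (i + 1) \<le> int T"
      using bnd by (metis of_nat_add of_nat_le_iff of_nat_mult)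
    have "f (c div P + 1) (int (i + 1) + int (c mod P) * int L)
        = (\<Sum>k = 1..K. \<theta> (c div P + 1) k * h k (int (c mod P) * int L + int (i + 1)))"
      using fdef n by (simp add: add.commute)
    also have "\<dots> = (\<Sum>k = 1..K. \<theta> (c div P + 1) k *
         (\<Sum>r = 1..R k. g k r (int (c mod P) * int L) * ht k r (int (i + 1))))"
      by (rule sum.cong[OF refl], subst ght) (use bndi in auto)
    also have "\<dots> = (\<Sum>k = 1..K. \<Sum>r = 1..Rmax. u (k, r) i * v (k, r) c)"
    proof (rule sum.cong[OF refl])
      fix k assume k: "k \<in> {1..K}"
      have sub: "{1..R k} \<subseteq> {1..Rmax}" using hl k by auto
      have "(\<Sum>r = 1..Rmax. u (k, r) i * v (k, r) c) = (\<Sum>r = 1..R k. u (k, r) i * v (k, r) c)"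
        by (rule sum.mono_neutral_right[OF _ sub]) (auto simp: u_def)
      also have "\<dots> = \<theta> (c div P + 1) k *
         (\<Sum>r = 1..R k. g k r (int (c mod P) * int L) * ht k r (int (i + 1)))"
        by (auto simp: sum_distrib_left u_def v_def mult_ac intro!: sum.cong)
      finally show "\<theta> (c div P + 1) k *
         (\<Sum>r = 1..R k. g k r (int (c mod P) * int L) * ht k r (int (i + 1)))
         = (\<Sum>r = 1..Rmax. u (k, r) i * v (k, r) c)" by simp
    qed
    also have "\<dots> = (\<Sum>q\<in>S. u q i * v q c)"
      unfolding S_def by (simp add: sum.cartesian_product)
    finally show "stacked_page_matrix N T L f $$ (i, c) = mat L (N * P) (\<lambda>(i, c). \<Sum>q\<in>S. u q i * v q c) $$ (i, c)"
      using iL cNP unfolding stacked_page_matrix_def P_def Let_def by simp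
  qed (simp_all add: stacked_page_matrix_def P_def Let_def)
  also have "vec_space.rank L \<dots> \<le> card S" by (rule rank_sum_rank1) (simp add: S_def)
  finally show ?thesis by (simp add: S_def)
qed

end
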